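(* Let $\mathcal X$ be a countable set, $\mathcal Y$ a finite set, $\rho$ a probability distribution on $\mathcal X$, and for each $x$ let $\mu(\cdot|x)$ and $\pi_{\mathrm{ref}}(\cdot|x)$ be probability distributions on $\mathcal Y$ with $\mu(y|x)>0$ and $\pi_{\mathrm{ref}}(y|x)>0$ for all $y$. Let $r:\mathcal X\times\mathcal Y\to\mathbb R$, $\tau>0$, and define for policies $\pi$ (with $\pi(y|x)>0$) and functions $V:\mathcal X\to\mathbb R$ $$\mathcal L(\pi,V)=\tfrac12\,\mathbb E_{x\sim\rho,\,y\sim\mu(\cdot|x)}\Big[\Big(r(x,y)-V(x)-\tau\log\tfrac{\pi(y|x)}{\pi_{\mathrm{ref}}(y|x)}\Big)^2\Big],$$ and $V^\pi(x)=\mathbb E_{y\sim\mu(\cdot|x)}\big[r(x,y)-\tau\log\frac{\pi(y|x)}{\pi_{\mathrm{ref}}(y|x)}\big]$ (the minimiser of $V\mapsto\mathcal L(\pi,V)$). Let $V^*(x)=\tau\log\mathbb E_{y\sim\pi_{\mathrm{ref}}(\cdot|x)}[e^{r(x,y)/\tau}]$ and $\pi^*(y|x)=\pi_{\mathrm{ref}}(y|x)e^{(r(x,y)-V^*(x))/\tau}$. Fix $V:\mathcal X\to\mathbb R$ and let $\pi_V$ be a minimiser of $\pi\mapsto\mathcal L(\pi,V)$ over policies with $\pi_V(y|x)>0$ for all $x,y$. Then for every $x\in\operatorname{supp}\rho$: (i) $\pi_V(y|x)\propto\pi_{\mathrm{ref}}(y|x)\exp\Big(\tfrac1\tau\Big[r(x,y)-\tfrac{\pi_V(y|x)}{\mu(y|x)}\big(V^{\pi_V}(x)-V(x)\big)\Big]\Big)$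 as a function of $y$; (ii) for all $y\in\mathcal Y$, $$\Big|\log\frac{\pi_V(y|x)}{\pi^*(y|x)}\Big|\le\frac2\tau\max_{y'\in\mathcal Y}\Big|\big(V^{\pi_V}(x)-V(x)\big)\Big(1-\frac{\pi_V(y'|x)}{\mu(y'|x)}\Big)\Big|.$$
   Context: $\pi^*$ is the optimal KL-regularised policy (maximiser of $\mathbb E_{x\sim\rho,y\sim\pi}[r(x,y)]-\tau\,\mathbb E_{x\sim\rho}D_{\mathrm{KL}}(\pi(\cdot|x)\|\pi_{\mathrm{ref}}(\cdot|x))$); $\mu$ is the data-generating behaviour distribution. *)

theory Defs
  imports "HOL-Probability.Probability"
begin

definition pos_policy :: "('x \<Rightarrow> 'y::finite \<Rightarrow> real) \<Rightarrow> bool" where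
  "pos_policy p \<longleftrightarrow> (\<forall>x y. p x y > 0) \<and> (\<forall>x. (\<Sum>y\<in>UNIV. p x y) = 1)"

definition lossL ::
  "'x pmf \<Rightarrow> ('x \<Rightarrow> 'y::finite \<Rightarrow> real) \<Rightarrow> ('x \<Rightarrow> 'y \<Rightarrow> real) \<Rightarrow> ('x \<Rightarrow> 'y \<Rightarrow> real) \<Rightarrow> real
    \<Rightarrow> ('x \<Rightarrow> 'y \<Rightarrow> real) \<Rightarrow> ('x \<Rightarrow> real) \<Rightarrow> ennreal" where
  "lossL rho mu pref r \<tau> p V =
     (\<integral>\<^sup>+ x. ennreal ((1/2) * (\<Sum>y\<in>UNIV. mu x y *
         (r x y - V x - \<tau> * ln (p x y / pref x y))\<^sup>2)) \<partial>measure_pmf rho)"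

definition Vpi ::
  "('x \<Rightarrow> 'y::finite \<Rightarrow> real) \<Rightarrow> ('x \<Rightarrow> 'y \<Rightarrow> real) \<Rightarrow> ('x \<Rightarrow> 'y \<Rightarrow> real) \<Rightarrow> real
    \<Rightarrow> ('x \<Rightarrow> 'y \<Rightarrow> real) \<Rightarrow> 'x \<Rightarrow> real" where
  "Vpi mu pref r \<tau> p x = (\<Sum>y\<in>UNIV. mu x y * (r x y - \<tau> * ln (p x y / pref x y)))"

definition Vstar ::
  "('x \<Rightarrow> 'y::finite \<Rightarrow> real) \<Rightarrow> ('x \<Rightarrow> 'y \<Rightarrow> real) \<Rightarrow> real \<Rightarrow> 'x \<Rightarrow> real" where
  "Vstar pref r \<tau> x = \<tau> * ln (\<Sum>y\<in>UNIV. pref x y * exp (r x y / \<tau>))"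

definition pistar ::
  "('x \<Rightarrow> 'y::finite \<Rightarrow> real) \<Rightarrow> ('x \<Rightarrow> 'y \<Rightarrow> real) \<Rightarrow> real \<Rightarrow> 'x \<Rightarrow> 'y \<Rightarrow> real" where
  "pistar pref r \<tau> x y = pref x y * exp ((r x y - Vstar pref r \<tau> x) / \<tau>)"

end

theory Submission imports Defs begin

lemma term_deriv:
  fixes m rr pr pp e v tau :: real
  assumes "pp > 0" "pr > 0"
  shows "((\<lambda>t. m * (rr - v - tau * ln ((pp + t * e) / pr))\<^sup>2 / 2) has_field_derivative
          m * (rr - v - tau * ln (pp / pr)) * (- tau * e / pp)) (at 0)"
  using assms
  by (auto intro!: derivative_eq_intros)

lemma stat:
  fixes m p pr rr :: "'y::finite \<Rightarrow> real" and v tau :: real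
  assumes ppos: "\<And>y. p y > 0" and psum: "(\<Sum>y\<in>UNIV. p y) = 1" and prpos: "\<And>y. pr y > 0"
    and tau: "tau > 0"
    and min: "\<And>q. (\<forall>y. q y > 0) \<Longrightarrow> (\<Sum>y\<in>UNIV. q y) = 1 \<Longrightarrow>
        (\<Sum>y\<in>UNIV. m y * (rr y - v - tau * ln (p y / pr y))\<^sup>2 / 2)
      \<le> (\<Sum>y\<in>UNIV. m y * (rr y - v - tau * ln (q y / pr y))\<^sup>2 / 2)"
  shows "m y1 * (rr y1 - v - tau * ln (p y1 / pr y1)) / p y1
       = m y2 * (rr y2 - v - tau * ln (p y2 / pr y2)) / p y2"
proof (cases "y1 = y2")
  case True then show ?thesis by simp
next
  case False
  define e where "e y = (of_bool (y = y1) - of_bool (y = y2) :: real)" for y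
  define g where "g y = m y * (rr y - v - tau * ln (p y / pr y)) * (- tau / p y)" for y
  define phi where "phi t = (\<Sum>y\<in>UNIV. m y * (rr y - v - tau * ln ((p y + t * e y) / pr y))\<^sup>2 / 2)" for t
  have esum: "(\<Sum>y\<in>UNIV. e y) = 0"
    unfolding e_def by (simp add: sum_subtractf)
  have D: "(phi has_field_derivative (\<Sum>y\<in>UNIV. g y * e y)) (at 0)"
    unfolding phi_def
    apply (rule DERIV_sum)
    using term_deriv[OF ppos prpos] by (simp add: g_def mult.assoc)
  have gs: "(\<Sum>y\<in>UNIV. g y * e y) = g y1 - g y2"
    unfolding e_def using False by (simp add: algebra_simps sum_subtractf if_distrib cong: if_cong)
  define d where "d = min (p y1) (p y2)"
  have d: "d > 0" using ppos by (simp add: d_def)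
  have "\<forall>t. \<bar>0 - t\<bar> < d \<longrightarrow> phi 0 \<le> phi t"
  proof (intro allI impI)
    fix t assume t: "\<bar>0 - t\<bar> < d"
    have qpos: "\<forall>y. p y + t * e y > 0"
    proof
      fix y
      show "p y + t * e y > 0"
        using t ppos[of y] False unfolding e_def d_def by (auto simp: abs_if split: if_splits)
    qed
    have "(\<Sum>y\<in>UNIV. p y + t * e y) = 1"
      by (simp add: sum.distrib psum sum_distrib_left[symmetric] esum)
    from min[OF qpos this] show "phi 0 \<le> phi t" by (simp add: phi_def)
  qed
  from DERIV_local_min[OF D d this] gs have "g y1 = g y2" by simp
  moreover have "g y = (- tau) * (m y * (rr y - v - tau * ln (p y / pr y)) / p y)" for y
    unfolding g_def by simp
  ultimately have "(- tau) * (m y1 * (rr y1 - v - tau * ln (p y1 / pr y1)) / p y1)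
     = (- tau) * (m y2 * (rr y2 - v - tau * ln (p y2 / pr y2)) / p y2)" by metis
  moreover have "- tau \<noteq> 0" using tau by simp
  ultimately show ?thesis by (meson mult_left_cancel)
qed

definition Fx :: "('x \<Rightarrow> 'y::finite \<Rightarrow> real) \<Rightarrow> ('x \<Rightarrow> 'y \<Rightarrow> real) \<Rightarrow> ('x \<Rightarrow> 'y \<Rightarrow> real) \<Rightarrow> real
    \<Rightarrow> ('x \<Rightarrow> real) \<Rightarrow> 'x \<Rightarrow> ('y \<Rightarrow> real) \<Rightarrow> real" where
  "Fx mu pref r \<tau> V x q = (\<Sum>y\<in>UNIV. mu x y * (r x y - V x - \<tau> * ln (q y / pref x y))\<^sup>2 / 2)"

lemma Fx_nonneg: assumes "\<And>y. mu x y > 0" shows "Fx mu pref r \<tau> V x q \<ge> 0"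
  unfolding Fx_def
proof (intro sum_nonneg divide_nonneg_pos mult_nonneg_nonneg)
  fix y show "0 \<le> mu x y" using assms[of y] by simp
qed auto

lemma loss_split:
  assumes mu: "\<And>x y. mu x y > 0"
  shows "lossL rho mu pref r \<tau> p V =
    (\<integral>\<^sup>+ x. ennreal (if x = z then 0 else Fx mu pref r \<tau> V x (p x)) \<partial>measure_pmf rho)
    + ennreal (Fx mu pref r \<tau> V z (p z)) * ennreal (pmf rho z)"
proof -
  have eq: "ennreal ((1/2) * (\<Sum>y\<in>UNIV. mu x y * (r x y - V x - \<tau> * ln (p x y / pref x y))\<^sup>2))
     = ennreal (if x = z then 0 else Fx mu pref r \<tau> V x (p x))
       + ennreal (Fx mu pref r \<tau> V z (p z)) * indicator {z} x" for x
    by (auto simp: Fx_def sum_divide_distrib[symmetric])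
  show ?thesis
    unfolding lossL_def eq
    by (subst nn_integral_add) (auto simp: nn_integral_cmult_indicator emeasure_pmf_single)
qed

lemma local_min:
  assumes mu: "pos_policy mu" and piV: "pos_policy piV"
    and piV_min: "\<And>p. pos_policy p \<Longrightarrow> lossL rho mu pref r \<tau> piV V \<le> lossL rho mu pref r \<tau> p V"
    and piV_fin: "lossL rho mu pref r \<tau> piV V \<noteq> \<infinity>"
    and x: "x0 \<in> set_pmf rho"
    and q: "\<forall>y. q y > 0" "(\<Sum>y\<in>UNIV. q y) = 1"
  shows "Fx mu pref r \<tau> V x0 (piV x0) \<le> Fx mu pref r \<tau> V x0 q"
proof -
  have mup: "\<And>x y. mu x y > 0" using mu by (simp add: pos_policy_def)
  define p where "p = piV(x0 := q)"
  have pp: "pos_policy p" using piV q by (auto simp: pos_policy_def p_def)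
  define A where "A = (\<integral>\<^sup>+ x. ennreal (if x = x0 then 0 else Fx mu pref r \<tau> V x (piV x)) \<partial>measure_pmf rho)"
  have A2: "(\<integral>\<^sup>+ x. ennreal (if x = x0 then 0 else Fx mu pref r \<tau> V x (p x)) \<partial>measure_pmf rho) = A"
    unfolding A_def p_def by (intro nn_integral_cong) auto
  have s1: "lossL rho mu pref r \<tau> piV V = A + ennreal (Fx mu pref r \<tau> V x0 (piV x0)) * ennreal (pmf rho x0)"
    using loss_split[OF mup, where p=piV and z=x0 and rho=rho and pref=pref and r=r and \<tau>=\<tau> and V=V] A_def by simp
  have s2: "lossL rho mu pref r \<tau> p V = A + ennreal (Fx mu pref r \<tau> V x0 q) * ennreal (pmf rho x0)"
    using loss_split[OF mup, where p=p and z=x0 and rho=rho and pref=pref and r=r and \<tau>=\<tau> and V=V] A2 by (simp add: p_def)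
  have "A \<noteq> \<infinity>"
  proof
    assume "A = \<infinity>" then show False using piV_fin s1 by simp
  qed
  moreover have "A + ennreal (Fx mu pref r \<tau> V x0 (piV x0)) * ennreal (pmf rho x0)
      \<le> A + ennreal (Fx mu pref r \<tau> V x0 q) * ennreal (pmf rho x0)"
    using piV_min[OF pp] s1 s2 by simp
  ultimately have "ennreal (Fx mu pref r \<tau> V x0 (piV x0) * pmf rho x0) \<le> ennreal (Fx mu pref r \<tau> V x0 q * pmf rho x0)"
    by (simp add: ennreal_add_left_cancel_le ennreal_mult'' ennreal_mult)
  moreover have "Fx mu pref r \<tau> V x0 (piV x0) \<ge> 0" "Fx mu pref r \<tau> V x0 q \<ge> 0"
    by (rule Fx_nonneg, rule mup)+
  moreover have "pmf rho x0 > 0" using x by (simp add: pmf_positive)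
  ultimately show ?thesis by (simp add: ennreal_le_iff)
qed

theorem proposition1:
  fixes rho :: "'x::countable pmf"
    and mu pref r piV :: "'x \<Rightarrow> 'y::finite \<Rightarrow> real"
    and \<tau> :: real
    and V :: "'x \<Rightarrow> real"
  assumes mu: "pos_policy mu"
    and pref: "pos_policy pref"
    and tau: "\<tau> > 0"
    and piV: "pos_policy piV"
    and piV_min: "\<And>p. pos_policy p \<Longrightarrow> lossL rho mu pref r \<tau> piV V \<le> lossL rho mu pref r \<tau> p V"
    and piV_fin: "lossL rho mu pref r \<tau> piV V \<noteq> \<infinity>"
    and x: "x \<in> set_pmf rho"
  shows "(\<exists>c. \<forall>y. piV x y = c * pref x y *
            exp ((1/\<tau>) * (r x y - piV x y / mu x y * (Vpi mu pref r \<tau> piV x - V x))))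
       \<and> (\<forall>y. \<bar>ln (piV x y / pistar pref r \<tau> x y)\<bar>
              \<le> (2/\<tau>) * Max (range (\<lambda>y'. \<bar>(Vpi mu pref r \<tau> piV x - V x) * (1 - piV x y' / mu x y')\<bar>)))"
proof -
  have mup: "\<And>y. mu x y > 0" and musum: "(\<Sum>y\<in>UNIV. mu x y) = 1" using mu by (auto simp: pos_policy_def)
  have pp: "\<And>y. piV x y > 0" and psum: "(\<Sum>y\<in>UNIV. piV x y) = 1" using piV by (auto simp: pos_policy_def)
  have prp: "\<And>y. pref x y > 0" using pref by (auto simp: pos_policy_def)
  define d where "d y = r x y - V x - \<tau> * ln (piV x y / pref x y)" for y
  have st: "mu x y1 * d y1 / piV x y1 = mu x y2 * d y2 / piV x y2" for y1 y2
    unfolding d_def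
  proof (rule stat[OF pp psum prp tau])
    fix q :: "'y \<Rightarrow> real" assume "\<forall>y. q y > 0" "(\<Sum>y\<in>UNIV. q y) = 1"
    from local_min[OF mu piV piV_min piV_fin x this]
    show "(\<Sum>y\<in>UNIV. mu x y * (r x y - V x - \<tau> * ln (piV x y / pref x y))\<^sup>2 / 2)
      \<le> (\<Sum>y\<in>UNIV. mu x y * (r x y - V x - \<tau> * ln (q y / pref x y))\<^sup>2 / 2)"
      by (simp add: Fx_def)
  qed
  define y0 :: 'y where "y0 = undefined"
  define k where "k = mu x y0 * d y0 / piV x y0"
  have md: "mu x y * d y = k * piV x y" for y
    using st[of y y0] pp[of y] unfolding k_def by (simp add: field_simps)
  define D where "D = Vpi mu pref r \<tau> piV x - V x"
  have "(\<Sum>y\<in>UNIV. mu x y * d y) = (\<Sum>y\<in>UNIV. mu x y * (r x y - \<tau> * ln (piV x y / pref x y)) - V x * mu x y)"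
    unfolding d_def by (simp add: algebra_simps)
  also have "\<dots> = Vpi mu pref r \<tau> piV x - V x * (\<Sum>y\<in>UNIV. mu x y)"
    by (simp add: sum_subtractf Vpi_def sum_distrib_left)
  finally have "D = (\<Sum>y\<in>UNIV. mu x y * d y)" by (simp add: musum D_def)
  also have "\<dots> = k" by (simp add: md sum_distrib_left[symmetric] psum)
  finally have Dk: "D = k" .
  define a where "a y = piV x y / mu x y * D" for y
  have dy: "d y = a y" for y
    using md[of y] mup[of y] unfolding a_def Dk by (simp add: field_simps)
  have lnp: "ln (piV x y / pref x y) = (r x y - V x - a y) / \<tau>" for y
    using dy[of y] tau unfolding d_def by (simp add: field_simps)
  have pexp: "piV x y = pref x y * exp ((r x y - V x - a y) / \<tau>)" for y
  proof -
    have "piV x y / pref x y = exp (ln (piV x y / pref x y))"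
      using pp[of y] prp[of y] by simp
    then show ?thesis using lnp[of y] prp[of y] by (simp add: field_simps)
  qed
  have part1: "\<exists>c. \<forall>y. piV x y = c * pref x y *
            exp ((1/\<tau>) * (r x y - piV x y / mu x y * (Vpi mu pref r \<tau> piV x - V x)))"
  proof (intro exI allI)
    fix y
    have ee: "(r x y - V x - a y) / \<tau> = - V x / \<tau> + (1/\<tau>) * (r x y - a y)"
      using tau by (simp add: field_simps)
    have e: "exp ((r x y - V x - a y) / \<tau>) = exp (- V x / \<tau>) * exp ((1/\<tau>) * (r x y - a y))"
      by (subst ee) (rule exp_add)
    have "piV x y = exp (- V x / \<tau>) * pref x y * exp ((1/\<tau>) * (r x y - a y))"
      using pexp[of y] e by (simp only: mult_ac)
    then show "piV x y = exp (- V x / \<tau>) * pref x y *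
            exp ((1/\<tau>) * (r x y - piV x y / mu x y * (Vpi mu pref r \<tau> piV x - V x)))"
      by (simp only: a_def D_def)
  qed
  define B where "B = Max (range (\<lambda>y'. \<bar>(Vpi mu pref r \<tau> piV x - V x) * (1 - piV x y' / mu x y')\<bar>))"
  have aB: "\<bar>D - a y\<bar> \<le> B" for y
  proof -
    have "\<bar>D * (1 - piV x y / mu x y)\<bar> \<le> B" unfolding B_def D_def by (rule Max_ge) auto
    moreover have "D * (1 - piV x y / mu x y) = D - a y" unfolding a_def by (simp add: algebra_simps)
    ultimately show ?thesis by simp
  qed
  define w where "w y = pref x y * exp (r x y / \<tau>)" for y
  define S where "S = (\<Sum>y\<in>UNIV. w y)"
  have wp: "w y > 0" for y using prp[of y] by (simp add: w_def)
  have Sp: "S > 0" unfolding S_def using wp by (simp add: sum_pos)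
  have VS: "Vstar pref r \<tau> x = \<tau> * ln S" by (simp add: Vstar_def S_def w_def)
  have pw: "piV x y = w y * exp (- (V x + a y) / \<tau>)" for y
  proof -
    have "(r x y - V x - a y) / \<tau> = r x y / \<tau> + (- (V x + a y) / \<tau>)"
      using tau by (simp add: field_simps)
    then show ?thesis using pexp[of y] by (simp add: w_def exp_add)
  qed
  have wsum: "(\<Sum>y\<in>UNIV. w y * exp (- (V x + a y) / \<tau>)) = 1" using psum pw by simp
  have up: "\<tau> * ln S \<le> V x + D + B"
  proof -
    have "(\<Sum>y\<in>UNIV. w y * exp (- (V x + D + B) / \<tau>)) \<le> (\<Sum>y\<in>UNIV. w y * exp (- (V x + a y) / \<tau>))"
    proof (rule sum_mono)
      fix y
      have "a y \<le> D + B" using aB[of y] by simp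
      then have "- (V x + D + B) / \<tau> \<le> - (V x + a y) / \<tau>" using tau by (simp add: divide_right_mono)
      then show "w y * exp (- (V x + D + B) / \<tau>) \<le> w y * exp (- (V x + a y) / \<tau>)"
        using wp[of y] by (simp add: mult_left_mono)
    qed
    then have "S * exp (- (V x + D + B) / \<tau>) \<le> 1" using wsum by (simp add: S_def sum_distrib_right)
    then have "ln (S * exp (- (V x + D + B) / \<tau>)) \<le> 0" using Sp by (simp add: ln_le_zero_iff)
    then have "ln S + (- (V x + D + B) / \<tau>) \<le> 0" by (simp only: ln_mult_pos[OF Sp exp_gt_zero] ln_exp)
    then have "ln S \<le> (V x + D + B) / \<tau>" unfolding minus_divide_left[symmetric] by linarith
    then show ?thesis using tau by (simp add: pos_le_divide_eq mult.commute)
  qed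
  have lo: "V x + D - B \<le> \<tau> * ln S"
  proof -
    have "(\<Sum>y\<in>UNIV. w y * exp (- (V x + a y) / \<tau>)) \<le> (\<Sum>y\<in>UNIV. w y * exp (- (V x + D - B) / \<tau>))"
    proof (rule sum_mono)
      fix y
      have "D - B \<le> a y" using aB[of y] by simp
      then have "- (V x + a y) / \<tau> \<le> - (V x + D - B) / \<tau>" using tau by (simp add: divide_right_mono)
      then show "w y * exp (- (V x + a y) / \<tau>) \<le> w y * exp (- (V x + D - B) / \<tau>)"
        using wp[of y] by (simp add: mult_left_mono)
    qed
    then have "1 \<le> S * exp (- (V x + D - B) / \<tau>)" using wsum by (simp add: S_def sum_distrib_right)
    then have "0 \<le> ln (S * exp (- (V x + D - B) / \<tau>))" using Sp by simp
    then have "0 \<le> ln S + (- (V x + D - B) / \<tau>)" by (simp only: ln_mult_pos[OF Sp exp_gt_zero] ln_exp)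
    then have "(V x + D - B) / \<tau> \<le> ln S" unfolding minus_divide_left[symmetric] by linarith
    then show ?thesis using tau by (simp add: pos_divide_le_eq mult.commute)
  qed
  have part2: "\<bar>ln (piV x y / pistar pref r \<tau> x y)\<bar> \<le> (2/\<tau>) * B" for y
  proof -
    have "piV x y / pistar pref r \<tau> x y = exp ((r x y - V x - a y) / \<tau>) / exp ((r x y - \<tau> * ln S) / \<tau>)"
      using pexp[of y] prp[of y] by (simp add: pistar_def VS)
    also have "\<dots> = exp ((\<tau> * ln S - V x - a y) / \<tau>)"
      by (simp add: exp_diff[symmetric] diff_divide_distrib[symmetric])
    finally have "ln (piV x y / pistar pref r \<tau> x y) = (\<tau> * ln S - V x - a y) / \<tau>" by simp
    moreover have "\<bar>\<tau> * ln S - V x - a y\<bar> \<le> 2 * B" using up lo aB[of y] by (simp add: abs_le_iff)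
    ultimately show ?thesis using tau by (simp add: abs_divide divide_right_mono)
  qed
  show ?thesis using part1 part2 unfolding B_def by blast
qed
end
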